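(* Let $\boldsymbol\xi_i=(\xi_i^1,\dots,\xi_i^k)\in\mathbb{R}^k$, $i\in\mathbb{Z}$, be independent, identically distributed vectors of (possibly dependent) non-negative random variables, and let $f$ be a directionally convex function on $\mathbb{R}^k$. Define $g$ on $\mathbb{Z}$ by $g(n)=\mathbb{E}f\big(\mathrm{sgn}(n)\sum_{i=1}^{|n|}\boldsymbol\xi_i\big)$ for $n\ne0$ and $g(0)=f(0,\dots,0)$. Then $g$ is convex on $\mathbb{Z}$, i.e. $g(n-1)+g(n+1)-2g(n)\ge0$ for all $n\in\mathbb{Z}$ (whenever the expectations are finite).
   Context: A measurable $f:\mathbb{R}^k\to\mathbb{R}$ is directionally convex if $\Delta^i_\epsilon\Delta^j_\delta f(x)\ge0$ for all $x\in\mathbb{R}^k$, $\epsilon,\delta>0$, $i,j\in\{1,\dots,k\}$, where $\Delta^i_\epsilon f(x)=f(x+\epsilon e_i)-f(x)$ and $e_i$ are the canonical basis vectors. $\mathrm{sgn}(n)=n/|n|$ for $n\ne0$. *)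

theory Defs
  imports "HOL-Probability.Probability"
begin

definition dir_convex :: "(real ^ 'k \<Rightarrow> real) \<Rightarrow> bool" where
  "dir_convex f \<longleftrightarrow> f \<in> borel_measurable borel \<and>
     (\<forall>x \<epsilon> \<delta> i j. \<epsilon> > 0 \<longrightarrow> \<delta> > 0 \<longrightarrow>
        f (x + \<epsilon> *\<^sub>R axis i 1 + \<delta> *\<^sub>R axis j 1) - f (x + \<delta> *\<^sub>R axis j 1)
        - f (x + \<epsilon> *\<^sub>R axis i 1) + f x \<ge> 0)"

definition signed_sum :: "(int \<Rightarrow> 'a \<Rightarrow> real ^ 'k) \<Rightarrow> int \<Rightarrow> 'a \<Rightarrow> real ^ 'k" where
  "signed_sum \<xi> n \<omega> = of_int (sgn n) *\<^sub>R (\<Sum>i\<in>{1..\<bar>n\<bar>}. \<xi> i \<omega>)"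

definition gfun :: "'a measure \<Rightarrow> (int \<Rightarrow> 'a \<Rightarrow> real ^ 'k) \<Rightarrow> (real ^ 'k \<Rightarrow> real) \<Rightarrow> int \<Rightarrow> real" where
  "gfun M \<xi> f n = (if n = 0 then f 0 else integral\<^sup>L M (\<lambda>\<omega>. f (signed_sum \<xi> n \<omega>)))"

end

theory Submission
  imports Defs
begin

definition D2 :: "(real ^ 'k \<Rightarrow> real) \<Rightarrow> real ^ 'k \<Rightarrow> real ^ 'k \<Rightarrow> real ^ 'k \<Rightarrow> real" where
  "D2 f x a b = f (x + a + b) - f (x + a) - f (x + b) + f x"

lemma D2_add_b: "D2 f x a (b1 + b2) = D2 f x a b1 + D2 f (x + b1) a b2"
  unfolding D2_def by (simp add: algebra_simps)

lemma D2_add_a: "D2 f x (a1 + a2) b = D2 f x a1 b + D2 f (x + a1) a2 b"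
  unfolding D2_def by (simp add: algebra_simps)

lemma D2_axis:
  assumes "dir_convex f" "e \<ge> 0" "d \<ge> 0"
  shows "D2 f x (e *\<^sub>R axis i 1) (d *\<^sub>R axis j 1) \<ge> 0"
proof (cases "e = 0 \<or> d = 0")
  case True then show ?thesis by (auto simp: D2_def)
next
  case False
  with assms have "e > 0" "d > 0" by auto
  then have "f (x + e *\<^sub>R axis i 1 + d *\<^sub>R axis j 1) - f (x + d *\<^sub>R axis j 1)
        - f (x + e *\<^sub>R axis i 1) + f x \<ge> 0"
    using assms(1) unfolding dir_convex_def by blast
  then show ?thesis unfolding D2_def by linarith
qed

lemma D2_axis_vec:
  assumes "dir_convex f" "e \<ge> 0" "finite S" "\<And>j. j \<in> S \<Longrightarrow> c j \<ge> 0"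
  shows "D2 f x (e *\<^sub>R axis i 1) (\<Sum>j\<in>S. c j *\<^sub>R axis j 1) \<ge> 0"
  using assms(3,4)
proof (induction S arbitrary: x rule: finite_induct)
  case empty then show ?case by (simp add: D2_def)
next
  case (insert j S)
  have "D2 f x (e *\<^sub>R axis i 1) (\<Sum>j\<in>insert j S. c j *\<^sub>R axis j 1)
    = D2 f x (e *\<^sub>R axis i 1) (c j *\<^sub>R axis j 1)
      + D2 f (x + c j *\<^sub>R axis j 1) (e *\<^sub>R axis i 1) (\<Sum>j\<in>S. c j *\<^sub>R axis j 1)"
    using insert by (simp add: D2_add_b)
  moreover have "D2 f x (e *\<^sub>R axis i 1) (c j *\<^sub>R axis j 1) \<ge> 0"
    using insert assms by (intro D2_axis) auto
  moreover have "D2 f (x + c j *\<^sub>R axis j 1) (e *\<^sub>R axis i 1) (\<Sum>j\<in>S. c j *\<^sub>R axis j 1) \<ge> 0"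
    using insert by auto
  ultimately show ?case by linarith
qed

lemma D2_vec_vec:
  assumes "dir_convex f" "finite S" "\<And>j. j \<in> S \<Longrightarrow> a j \<ge> 0" "finite T" "\<And>j. j \<in> T \<Longrightarrow> c j \<ge> 0"
  shows "D2 f x (\<Sum>i\<in>S. a i *\<^sub>R axis i 1) (\<Sum>j\<in>T. c j *\<^sub>R axis j 1) \<ge> 0"
  using assms(2,3)
proof (induction S arbitrary: x rule: finite_induct)
  case empty then show ?case by (simp add: D2_def)
next
  case (insert i S)
  have "D2 f x (\<Sum>i\<in>insert i S. a i *\<^sub>R axis i 1) (\<Sum>j\<in>T. c j *\<^sub>R axis j 1)
    = D2 f x (a i *\<^sub>R axis i 1) (\<Sum>j\<in>T. c j *\<^sub>R axis j 1)
      + D2 f (x + a i *\<^sub>R axis i 1) (\<Sum>i\<in>S. a i *\<^sub>R axis i 1) (\<Sum>j\<in>T. c j *\<^sub>R axis j 1)"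
    using insert by (simp add: D2_add_a)
  moreover have "D2 f x (a i *\<^sub>R axis i 1) (\<Sum>j\<in>T. c j *\<^sub>R axis j 1) \<ge> 0"
    using insert assms by (intro D2_axis_vec) auto
  moreover have "D2 f (x + a i *\<^sub>R axis i 1) (\<Sum>i\<in>S. a i *\<^sub>R axis i 1) (\<Sum>j\<in>T. c j *\<^sub>R axis j 1) \<ge> 0"
    using insert by auto
  ultimately show ?case by linarith
qed

lemma vec_expand: "(x::real^'k) = (\<Sum>i\<in>UNIV. (x $ i) *\<^sub>R axis i 1)"
  using basis_expansion[of x] by (simp add: scalar_mult_eq_scaleR)

lemma D2_nonneg:
  assumes "dir_convex f" "\<And>i. a $ i \<ge> 0" "\<And>i. b $ i \<ge> 0"
  shows "D2 f x a b \<ge> 0"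
proof -
  have "D2 f x (\<Sum>i\<in>UNIV. (a $ i) *\<^sub>R axis i 1) (\<Sum>i\<in>UNIV. (b $ i) *\<^sub>R axis i 1) \<ge> 0"
    using assms by (intro D2_vec_vec) auto
  then show ?thesis using vec_expand[of a] vec_expand[of b] by simp
qed

lemma dir_convex_neg:
  fixes f :: "real^'k \<Rightarrow> real"
  assumes "dir_convex f" shows "dir_convex (\<lambda>x. f (- x))"
proof -
  have m: "(\<lambda>x. f (- x)) \<in> borel_measurable borel"
  proof -
    have "uminus \<in> borel_measurable (borel :: (real^'k) measure)"
      by (intro borel_measurable_continuous_onI continuous_on_minus continuous_on_id)
    then show ?thesis using assms unfolding dir_convex_def
      using measurable_compose[of uminus borel borel f borel] by auto
  qed
  { fix x :: "real^'k" and e d :: real and i j :: 'k assume "(e::real) > 0" "(d::real) > 0"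
    let ?y = "- x - e *\<^sub>R axis i 1 - d *\<^sub>R axis j 1"
    have "f (?y + e *\<^sub>R axis i 1 + d *\<^sub>R axis j 1) - f (?y + d *\<^sub>R axis j 1)
        - f (?y + e *\<^sub>R axis i 1) + f ?y \<ge> 0"
      using assms \<open>e > 0\<close> \<open>d > 0\<close> unfolding dir_convex_def by blast
    then have "f (- (x + e *\<^sub>R axis i 1 + d *\<^sub>R axis j 1)) - f (- (x + d *\<^sub>R axis j 1))
        - f (- (x + e *\<^sub>R axis i 1)) + f (- x) \<ge> 0"
      by (simp add: algebra_simps) }
  with m show ?thesis unfolding dir_convex_def by blast
qed


context prob_space
begin

lemma indep_sum_vec:
  fixes X :: "int \<Rightarrow> 'a \<Rightarrow> real ^ 'k"
  assumes indep: "indep_vars (\<lambda>_. borel) X UNIV" and I: "finite I" "i \<notin> I"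
  shows "indep_var borel (\<lambda>\<omega>. \<Sum>j\<in>I. X j \<omega>) borel (X i)"
proof -
  have "indep_var
    borel ((\<lambda>g. \<Sum>j\<in>I. g j) \<circ> (\<lambda>\<omega>. restrict (\<lambda>j. X j \<omega>) I))
    borel ((\<lambda>g. g i) \<circ> (\<lambda>\<omega>. restrict (\<lambda>j. X j \<omega>) {i}))"
    using I by (intro indep_var_compose[OF indep_var_restrict[OF indep]]) auto
  also have "((\<lambda>g. g i) \<circ> (\<lambda>\<omega>. restrict (\<lambda>j. X j \<omega>) {i})) = X i"
    by auto
  also have "((\<lambda>g. \<Sum>j\<in>I. g j) \<circ> (\<lambda>\<omega>. restrict (\<lambda>j. X j \<omega>) I)) = (\<lambda>\<omega>. \<Sum>j\<in>I. X j \<omega>)"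
    by (auto cong: rev_conj_cong)
  finally show ?thesis .
qed

lemma distr_pair_eq:
  fixes X :: "int \<Rightarrow> 'a \<Rightarrow> real ^ 'k"
  assumes indep: "indep_vars (\<lambda>_. borel) X UNIV" and I: "finite I" "i \<notin> I" "j \<notin> I"
    and ident: "distr M borel (X i) = distr M borel (X j)"
  shows "distr M (borel \<Otimes>\<^sub>M borel) (\<lambda>\<omega>. (\<Sum>l\<in>I. X l \<omega>, X i \<omega>))
       = distr M (borel \<Otimes>\<^sub>M borel) (\<lambda>\<omega>. (\<Sum>l\<in>I. X l \<omega>, X j \<omega>))"
proof -
  have a: "indep_var borel (\<lambda>\<omega>. \<Sum>l\<in>I. X l \<omega>) borel (X i)"
    using indep_sum_vec[OF indep I(1,2)] .
  have b: "indep_var borel (\<lambda>\<omega>. \<Sum>l\<in>I. X l \<omega>) borel (X j)"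
    using indep_sum_vec[OF indep I(1,3)] .
  show ?thesis using a b ident unfolding indep_var_distribution_eq by metis
qed

lemma core:
  fixes \<xi> :: "int \<Rightarrow> 'a \<Rightarrow> real ^ 'k" and f :: "real ^ 'k \<Rightarrow> real" and m :: nat
  defines "S \<equiv> \<lambda>m \<omega>. \<Sum>i\<in>{1..int m}. \<xi> i \<omega>"
  assumes meas: "\<And>i. \<xi> i \<in> borel_measurable M"
    and indep: "indep_vars (\<lambda>_. borel) \<xi> UNIV"
    and ident: "\<And>i j. distr M borel (\<xi> i) = distr M borel (\<xi> j)"
    and nonneg: "\<And>i \<omega> c. \<omega> \<in> space M \<Longrightarrow> \<xi> i \<omega> $ c \<ge> 0"
    and dc: "dir_convex f"
    and int0: "integrable M (\<lambda>\<omega>. f (S m \<omega>))"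
    and int1: "integrable M (\<lambda>\<omega>. f (S (m+1) \<omega>))"
    and int2: "integrable M (\<lambda>\<omega>. f (S (m+2) \<omega>))"
  shows "(\<integral>\<omega>. f (S m \<omega>) \<partial>M) + (\<integral>\<omega>. f (S (m+2) \<omega>) \<partial>M) - 2 * (\<integral>\<omega>. f (S (m+1) \<omega>) \<partial>M) \<ge> 0"
proof -
  define T where "T = S m"
  define a where "a = \<xi> (int m + 1)"
  define b where "b = \<xi> (int m + 2)"
  have s1: "S (m+1) \<omega> = T \<omega> + a \<omega>" for \<omega>
  proof -
    have "{1..int (m+1)} = insert (int m + 1) {1..int m}" by auto
    then show ?thesis unfolding S_def T_def a_def by (simp add: add.commute)
  qed
  have s2: "S (m+2) \<omega> = T \<omega> + a \<omega> + b \<omega>" for \<omega>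
  proof -
    have "{1..int (m+2)} = insert (int m + 2) (insert (int m + 1) {1..int m})" by auto
    then show ?thesis unfolding S_def T_def a_def b_def by (simp add: algebra_simps)
  qed
  have fm: "f \<in> borel_measurable borel" using dc unfolding dir_convex_def by blast
  have hm: "(\<lambda>p. f (fst p + snd p)) \<in> borel_measurable (borel \<Otimes>\<^sub>M borel)"
    using fm by measurable
  have Tm: "T \<in> borel_measurable M" unfolding T_def S_def using meas by measurable
  have am: "a \<in> borel_measurable M" "b \<in> borel_measurable M" unfolding a_def b_def using meas by auto
  have pa: "(\<lambda>\<omega>. (T \<omega>, a \<omega>)) \<in> M \<rightarrow>\<^sub>M borel \<Otimes>\<^sub>M borel" using Tm am by measurable
  have pb: "(\<lambda>\<omega>. (T \<omega>, b \<omega>)) \<in> M \<rightarrow>\<^sub>M borel \<Otimes>\<^sub>M borel" using Tm am by measurable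
  have deq: "distr M (borel \<Otimes>\<^sub>M borel) (\<lambda>\<omega>. (T \<omega>, a \<omega>)) = distr M (borel \<Otimes>\<^sub>M borel) (\<lambda>\<omega>. (T \<omega>, b \<omega>))"
    unfolding T_def S_def a_def b_def by (rule distr_pair_eq[OF indep]) (auto simp: ident)
  have ieq: "(\<integral>\<omega>. f (T \<omega> + a \<omega>) \<partial>M) = (\<integral>\<omega>. f (T \<omega> + b \<omega>) \<partial>M)"
    using integral_distr[OF pa hm] integral_distr[OF pb hm] deq by simp
  have iTa: "integrable M (\<lambda>\<omega>. f (T \<omega> + a \<omega>))" using int1 s1 by simp
  have iTb: "integrable M (\<lambda>\<omega>. f (T \<omega> + b \<omega>))"
    using iTa integrable_distr_eq[OF pa hm] integrable_distr_eq[OF pb hm] deq by simp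
  have iT: "integrable M (\<lambda>\<omega>. f (T \<omega>))" using int0 T_def by simp
  have iTab: "integrable M (\<lambda>\<omega>. f (T \<omega> + a \<omega> + b \<omega>))" using int2 s2 by simp
  have "0 \<le> (\<integral>\<omega>. D2 f (T \<omega>) (a \<omega>) (b \<omega>) \<partial>M)"
    using nonneg dc by (intro integral_nonneg_AE AE_I2 D2_nonneg) (auto simp: a_def b_def)
  also have "\<dots> = (\<integral>\<omega>. f (T \<omega> + a \<omega> + b \<omega>) \<partial>M) - (\<integral>\<omega>. f (T \<omega> + a \<omega>) \<partial>M)
      - (\<integral>\<omega>. f (T \<omega> + b \<omega>) \<partial>M) + (\<integral>\<omega>. f (T \<omega>) \<partial>M)"
    unfolding D2_def using iT iTa iTb iTab by simp
  finally show ?thesis using ieq s1 s2 T_def by simp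
qed

end

theorem lemmaA1:
  fixes M :: "'a measure" and \<xi> :: "int \<Rightarrow> 'a \<Rightarrow> real ^ 'k"
    and f :: "real ^ 'k \<Rightarrow> real" and n :: int
  assumes "prob_space M"
    and meas: "\<And>i. \<xi> i \<in> borel_measurable M"
    and indep: "prob_space.indep_vars M (\<lambda>_. borel) \<xi> UNIV"
    and ident: "\<And>i j. distr M borel (\<xi> i) = distr M borel (\<xi> j)"
    and nonneg: "\<And>i \<omega> c. \<omega> \<in> space M \<Longrightarrow> \<xi> i \<omega> $ c \<ge> 0"
    and dc: "dir_convex f"
    and finite_exp: "\<And>m. m \<in> {n - 1, n, n + 1} \<Longrightarrow> m \<noteq> 0 \<Longrightarrow>
                       integrable M (\<lambda>\<omega>. f (signed_sum \<xi> m \<omega>))"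
  shows "gfun M \<xi> f (n - 1) + gfun M \<xi> f (n + 1) - 2 * gfun M \<xi> f n \<ge> 0"
proof -
  interpret prob_space M by fact
  define S where "S \<equiv> \<lambda>m \<omega>. \<Sum>i\<in>{1..int m}. \<xi> i \<omega>"
  define h where "h = (\<lambda>x. f (- x))"
  have dch: "dir_convex h" unfolding h_def by (rule dir_convex_neg[OF dc])
  have sp: "signed_sum \<xi> k = S (nat k)" if "k \<ge> 0" for k
    using that unfolding signed_sum_def S_def
    by (cases "k = 0") (auto simp: fun_eq_iff)
  have sn: "signed_sum \<xi> k = (\<lambda>\<omega>. - S (nat (-k)) \<omega>)" if "k < 0" for k
    using that unfolding signed_sum_def S_def by (auto simp: fun_eq_iff)
  have S0: "S 0 = (\<lambda>_. 0)" unfolding S_def by (simp add: fun_eq_iff)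
  have gp: "gfun M \<xi> g k = (\<integral>\<omega>. g (S (nat k) \<omega>) \<partial>M)" if "k \<ge> 0" for k g
    using that sp[OF that] S0 prob_space by (auto simp: gfun_def)
  have gn: "gfun M \<xi> f k = (\<integral>\<omega>. h (S (nat (-k)) \<omega>) \<partial>M)" if "k \<le> 0" for k
  proof (cases "k = 0")
    case True then show ?thesis using S0 prob_space by (simp add: gfun_def h_def)
  next
    case False then show ?thesis using sn[of k] that by (simp add: gfun_def h_def)
  qed
  have ip: "integrable M (\<lambda>\<omega>. f (S (nat k) \<omega>))" if "k \<in> {n - 1, n, n + 1}" "k \<ge> 0" for k
  proof (cases "k = 0")
    case True then show ?thesis using S0 by simp
  next
    case False then show ?thesis using finite_exp[OF that(1)] sp[OF that(2)] by simp
  qed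
  have inn: "integrable M (\<lambda>\<omega>. h (S (nat (-k)) \<omega>))" if "k \<in> {n - 1, n, n + 1}" "k \<le> 0" for k
  proof (cases "k = 0")
    case True then show ?thesis using S0 by simp
  next
    case False then show ?thesis using finite_exp[OF that(1)] sn[of k] that(2) by (simp add: h_def)
  qed
  consider "n > 0" | "n = 0" | "n < 0" by linarith
  then show ?thesis
  proof cases
    case 1
    define m where "m = nat (n - 1)"
    have e: "nat (n - 1) = m" "nat n = m + 1" "nat (n + 1) = m + 2" using 1 by (auto simp: m_def)
    have "(\<integral>\<omega>. f (S m \<omega>) \<partial>M) + (\<integral>\<omega>. f (S (m+2) \<omega>) \<partial>M) - 2 * (\<integral>\<omega>. f (S (m+1) \<omega>) \<partial>M) \<ge> 0"
      unfolding S_def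
      by (rule core[OF meas indep[unfolded] ident nonneg dc])
         (use ip[of "n-1"] ip[of n] ip[of "n+1"] 1 e in \<open>auto simp: S_def\<close>)
    then show ?thesis using gp[of "n-1"] gp[of n] gp[of "n+1"] 1 e by simp
  next
    case 2
    have "0 \<le> (\<integral>\<omega>. D2 f (- \<xi> 1 \<omega>) (\<xi> 1 \<omega>) (\<xi> 1 \<omega>) \<partial>M)"
      using nonneg dc by (intro integral_nonneg_AE AE_I2 D2_nonneg) auto
    also have "\<dots> = (\<integral>\<omega>. f (\<xi> 1 \<omega>) + f (- \<xi> 1 \<omega>) - 2 * f 0 \<partial>M)"
      by (rule Bochner_Integration.integral_cong) (auto simp: D2_def)
    also have "\<dots> = (\<integral>\<omega>. f (\<xi> 1 \<omega>) \<partial>M) + (\<integral>\<omega>. f (- \<xi> 1 \<omega>) \<partial>M) - 2 * f 0"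
    proof -
      have "integrable M (\<lambda>\<omega>. f (\<xi> 1 \<omega>))" "integrable M (\<lambda>\<omega>. f (- \<xi> 1 \<omega>))"
        using ip[of 1] inn[of "-1"] 2 by (auto simp: S_def h_def)
      then show ?thesis using prob_space by simp
    qed
    finally show ?thesis using gp[of 1] gn[of "-1"] 2 by (simp add: gfun_def S_def h_def)
  next
    case 3
    define m where "m = nat (- n - 1)"
    have e: "nat (-(n + 1)) = m" "nat (-n) = m + 1" "nat (-(n - 1)) = m + 2" using 3 by (auto simp: m_def)
    have "(\<integral>\<omega>. h (S m \<omega>) \<partial>M) + (\<integral>\<omega>. h (S (m+2) \<omega>) \<partial>M) - 2 * (\<integral>\<omega>. h (S (m+1) \<omega>) \<partial>M) \<ge> 0"
      unfolding S_def
      by (rule core[OF meas indep[unfolded] ident nonneg dch])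
         (use inn[of "n-1"] inn[of n] inn[of "n+1"] 3 e in \<open>auto simp: S_def\<close>)
    then show ?thesis using gn[of "n-1"] gn[of n] gn[of "n+1"] 3 e by simp
  qed
qed

end
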